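(* The bounds $LB$ and $UB$ converge to the continuous Erlang-C function uniformly in the safety factor: $$\lim_{\lambda\to\infty}\sup_{\beta>0}\big[\tilde\alpha(\beta,\lambda)-LB(\beta,\lambda)\big]=0,\qquad \lim_{\lambda\to\infty}\sup_{\beta>0}\big[UB(\beta,\lambda)-\tilde\alpha(\beta,\lambda)\big]=0.$$
   Context: $\phi,\Phi$ are the standard normal density and distribution function. For $\lambda>0$ and real $n\ge 0$, the continuous Erlang-C function is $\bar\alpha(n,\lambda)=\min\Big\{1,\big[\lambda\int_0^\infty t e^{-\lambda t}(1+t)^{n-1}\,dt\big]^{-1}\Big\}$ (for $n\ge\lambda$ the minimum is attained by the second term; for integer $n>\lambda$ it equals the Erlang-C probability that an arriving customer waits in an $M/M/n$ queue with arrival rate $\lambda$ and service rate 1). Set $\tilde\alpha(\beta,\lambda)=\bar\alpha(\lambda+\beta\sqrt\lambda,\lambda)$ for $\beta\ge0$. For $\lambda>0,\beta\ge 0$ set $n=\lambda+\beta\sqrt{\lambda}$, $\rho=\lambda/n$, $a=\sqrt{-2n(1-\rho+\ln\rho)}$, $\gamma=(n-\lambda)/\sqrt{n}$, and $UB(\beta,\lambda)=\left[\rho+\gamma\left(\frac{\Phi(a)}{\phi(a)}+\frac{2}{3\sqrt{n}}\right)\right]^{-1}$, $LB(\beta,\lambda)=\left[\rho+\gamma\left(\frac{\Phi(a)}{\phi(a)}+\frac{2}{3\sqrt{n}}+\frac{1}{\phi(a)(12n-1)}\right)\right]^{-1}$. It is known (Janssen, van Leeuwaarden and Zwart) that $LB(\beta,\lambda)\le\tilde\alpha(\beta,\lambda)\le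 UB(\beta,\lambda)$ for all $\lambda>0$, $\beta>0$. *)

theory Defs
  imports "HOL-Analysis.Analysis"
begin

definition phi :: "real \<Rightarrow> real" where
  "phi x = exp (- (x\<^sup>2) / 2) / sqrt (2 * pi)"

definition Phi :: "real \<Rightarrow> real" where
  "Phi x = (LBINT t:{..x}. phi t)"

definition alpha_bar :: "real \<Rightarrow> real \<Rightarrow> real" where
  "alpha_bar n lam = min 1
     (inverse (lam * (LBINT t:{0..}. t * exp (- lam * t) * (1 + t) powr (n - 1))))"

definition alpha_tilde :: "real \<Rightarrow> real \<Rightarrow> real" where
  "alpha_tilde \<beta> lam = alpha_bar (lam + \<beta> * sqrt lam) lam"

definition UB :: "real \<Rightarrow> real \<Rightarrow> real" where
  "UB \<beta> lam = (let n = lam + \<beta> * sqrt lam; \<rho> = lam / n;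
      a = sqrt (- 2 * n * (1 - \<rho> + ln \<rho>)); \<gamma> = (n - lam) / sqrt n
    in inverse (\<rho> + \<gamma> * (Phi a / phi a + 2 / (3 * sqrt n))))"

definition LB :: "real \<Rightarrow> real \<Rightarrow> real" where
  "LB \<beta> lam = (let n = lam + \<beta> * sqrt lam; \<rho> = lam / n;
      a = sqrt (- 2 * n * (1 - \<rho> + ln \<rho>)); \<gamma> = (n - lam) / sqrt n
    in inverse (\<rho> + \<gamma> * (Phi a / phi a + 2 / (3 * sqrt n)
                               + 1 / (phi a * (12 * n - 1)))))"

end

theory Submission
  imports Defs "HOL-Probability.Distributions" "HOL-Real_Asymp.Real_Asymp"
begin

lemma phi_eq: "phi x = std_normal_density x"
  by (simp add: phi_def std_normal_density_def)

lemma phi_pos: "phi x > 0" by (simp add: phi_def)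

lemma phi_integrable: "integrable lborel phi"
proof -
  have e: "phi = normal_density 0 1" by (rule ext) (simp add: phi_eq)
  show ?thesis unfolding e using integrable_normal_density[of 0 1] by simp
qed

lemma phi_cont: "continuous_on S phi"
  unfolding phi_def by (intro continuous_intros) auto

lemma phi_set_integrable: "set_integrable lborel A phi" if "A \<in> sets lborel"
  using phi_integrable that unfolding set_integrable_def by (intro integrable_mult_indicator) auto

lemma Phi_split:
  assumes "c \<le> x" shows "Phi x = Phi c + integral {c..x} phi"
proof -
  have e: "{..x} = {..c} \<union> {c<..x}" using assms by auto
  have "Phi x = (LBINT t:{..c}. phi t) + (LBINT t:{c<..x}. phi t)"
    unfolding Phi_def e by (rule set_integral_Un) (auto intro: phi_set_integrable)
  also have "(LBINT t:{c<..x}. phi t) = integral {c<..x} phi"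
    by (rule set_borel_integral_eq_integral(2)) (simp add: phi_set_integrable)
  also have "integral {c<..x} phi = integral {c..x} phi"
    by (rule integral_spike_set; rule negligible_subset[OF negligible_sing[of c]]) auto
  finally show ?thesis by (simp add: Phi_def)
qed

lemma Phi_deriv: "(Phi has_real_derivative phi x) (at x)"
proof -
  let ?c = "x - 1"
  have d: "((\<lambda>u. integral {?c..u} phi) has_real_derivative phi x) (at x within {?c..x+1})"
    by (rule integral_has_real_derivative) (auto intro: phi_cont)
  hence d2: "((\<lambda>u. integral {?c..u} phi) has_real_derivative phi x) (at x)"
  proof -
    have "{?c<..<x+1} \<subseteq> {?c..x+1}" by auto
    from has_field_derivative_subset[OF d this] show ?thesis
      using at_within_open[of x "{?c<..<x+1}"] by simp
  qed
  have "((\<lambda>u. Phi ?c + integral {?c..u} phi) has_real_derivative phi x) (at x)"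
    using d2 by (auto intro!: derivative_eq_intros)
  thus ?thesis
    by (rule has_field_derivative_transform_within_open[where S="{?c<..}"])
       (auto, metis Phi_split less_imp_le)
qed

lemma Phi_cont: "isCont Phi x"
  using Phi_deriv DERIV_isCont by blast

lemma Phi_nonneg: "Phi x \<ge> 0"
  unfolding Phi_def set_lebesgue_integral_def
  by (rule Bochner_Integration.integral_nonneg) (auto simp: indicator_def intro: less_imp_le phi_pos)

lemma Phi_le: "Phi x \<le> (LINT t|lborel. phi t)"
proof -
  have "integrable lborel (\<lambda>t. indicator {..x} t *\<^sub>R phi t)"
    using phi_set_integrable[of "{..x}"] unfolding set_integrable_def by simp
  thus ?thesis unfolding Phi_def set_lebesgue_integral_def
    by (intro Bochner_Integration.integral_mono phi_integrable) (auto simp: indicator_def less_imp_le phi_pos)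
qed

lemma Phi_mono: "x \<le> y \<Longrightarrow> Phi x \<le> Phi y"
proof -
  assume xy: "x \<le> y"
  have "integral {x..y} phi \<ge> 0"
    by (rule integral_nonneg) (auto intro: integrable_continuous_interval phi_cont less_imp_le phi_pos)
  thus ?thesis using Phi_split[OF xy] by linarith
qed

lemma Phi_0_pos: "Phi 0 > 0"
proof -
  have "integral {-1..0} phi \<ge> integral {-1..0} (\<lambda>_::real. phi 1)"
  proof (rule Henstock_Kurzweil_Integration.integral_le)
    show "phi 1 \<le> phi x" if "x \<in> {-1..0}" for x
    proof -
      have "x^2 \<le> 1" using that by (auto simp: abs_square_le_1)
      thus ?thesis unfolding phi_def by (auto intro!: divide_right_mono)
    qed
  qed (auto intro: integrable_continuous_interval phi_cont)
  moreover have "integral {-1..0} (\<lambda>_::real. phi 1) = phi 1" by simp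
  ultimately show ?thesis using Phi_split[of "-1" 0] Phi_nonneg[of "-1"] phi_pos[of 1] by linarith
qed

lemma Phi_at_bot: "(Phi \<longlongrightarrow> 0) at_bot"
proof (rule tendsto_at_botI_sequentially)
  fix X :: "nat \<Rightarrow> real" assume X: "filterlim X at_bot sequentially"
  have m: "(\<lambda>t. indicator {..X n} t *\<^sub>R phi t) \<in> borel_measurable lborel" for n
    using phi_set_integrable[of "{..X n}"] unfolding set_integrable_def by (intro borel_measurable_integrable) auto
  have "(\<lambda>n. LINT t|lborel. indicator {..X n} t *\<^sub>R phi t) \<longlonglongrightarrow> (LINT t|lborel. 0 * phi t)"
  proof (rule integral_dominated_convergence[where w=phi and M=lborel and f="\<lambda>t. 0 * phi t" and s="\<lambda>n t. indicator {..X n} t *\<^sub>R phi t"])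
    show "AE t in lborel. (\<lambda>n. indicator {..X n} t *\<^sub>R phi t) \<longlonglongrightarrow> 0 * phi t"
    proof (rule AE_I2)
      fix t
      from X have "eventually (\<lambda>n. X n < t) sequentially"
        unfolding filterlim_at_bot_dense by auto
      then show "(\<lambda>n. indicator {..X n} t *\<^sub>R phi t) \<longlonglongrightarrow> 0 * phi t"
        by (intro tendsto_eventually) (auto split: split_indicator elim!: eventually_mono)
    qed
    show "AE t in lborel. norm (indicator {..X n} t *\<^sub>R phi t) \<le> phi t" for n
      by (auto split: split_indicator intro: less_imp_le phi_pos)
  qed (use m phi_integrable in auto)
  thus "(\<lambda>n. Phi (X n)) \<longlonglongrightarrow> 0"
    unfolding Phi_def set_lebesgue_integral_def by simp
qed

definition psi :: "real \<Rightarrow> real" where "psi z = z - 1 - ln z"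
definition rr :: "real \<Rightarrow> real" where
  "rr z = (if z = 1 then 1 else sqrt (2 * psi z / (z - 1)^2))"
definition sfun :: "real \<Rightarrow> real" where "sfun z = (z - 1) * rr z"
definition sd :: "real \<Rightarrow> real" where "sd z = 1 / (z * rr z)"

lemma psi_nonneg: "z > 0 \<Longrightarrow> psi z \<ge> 0"
  unfolding psi_def using ln_le_minus_one[of z] by simp

lemma psi_pos: "z > 0 \<Longrightarrow> z \<noteq> 1 \<Longrightarrow> psi z > 0"
  unfolding psi_def using ln_le_minus_one[of z] ln_eq_minus_one[of z] by force

lemma psi_1 [simp]: "psi 1 = 0" by (simp add: psi_def)

lemma psi_deriv: "z > 0 \<Longrightarrow> (psi has_real_derivative (1 - 1/z)) (at z)"
  unfolding psi_def[abs_def] by (auto intro!: derivative_eq_intros)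

lemma rr_pos: "z > 0 \<Longrightarrow> rr z > 0"
  unfolding rr_def using psi_pos[of z] by auto

lemma sfun_sq: "z > 0 \<Longrightarrow> (sfun z)^2 = 2 * psi z"
  unfolding sfun_def rr_def using psi_nonneg[of z]
  by (auto simp: power_mult_distrib)

lemma sfun_lt1: "0 < z \<Longrightarrow> z < 1 \<Longrightarrow> sfun z = - sqrt (2 * psi z)"
proof -
  assume z: "0 < z" "z < 1"
  have "sqrt (2 * psi z / (z - 1)^2) = sqrt (2 * psi z) / (1 - z)"
    using z by (simp add: real_sqrt_divide power2_commute)
  thus ?thesis using z unfolding sfun_def rr_def by (simp add: field_simps)
qed

lemma sfun_ge1: "1 \<le> z \<Longrightarrow> sfun z = sqrt (2 * psi z)"
proof (cases "z = 1")
  case False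
  assume z: "1 \<le> z"
  hence z': "1 < z" using False by simp
  have "sqrt (2 * psi z / (z - 1)^2) = sqrt (2 * psi z) / (z - 1)"
    using z' by (simp add: real_sqrt_divide)
  thus ?thesis using z' unfolding sfun_def rr_def by (simp add: field_simps)
qed (simp add: sfun_def rr_def)

lemma rr_lim: "(rr \<longlongrightarrow> 1) (at 1)"
proof -
  have "((\<lambda>z::real. sqrt (2*(z-1-ln z)/(z-1)^2)) \<longlongrightarrow> 1) (at 1)"
    by real_asymp
  thus ?thesis
  proof (subst tendsto_cong)
    show "eventually (\<lambda>z. rr z = sqrt (2*(z-1-ln z)/(z-1)^2)) (at 1)"
      by (auto simp: eventually_at_filter rr_def psi_def)
  qed
qed

lemma rr_cont: "z > 0 \<Longrightarrow> isCont rr z"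
proof (cases "z = 1")
  case True
  thus ?thesis using rr_lim by (simp add: isCont_def rr_def)
next
  case False
  assume z: "z > 0"
  have "isCont (\<lambda>z. sqrt (2 * (z - 1 - ln z) / (z - 1)^2)) z"
    using False z by (intro continuous_intros) auto
  moreover have "eventually (\<lambda>y. y \<noteq> 1) (nhds z)"
    using False by (intro t1_space_nhds) 
  hence ev: "eventually (\<lambda>y. rr y = sqrt (2 * (y - 1 - ln y) / (y - 1)^2)) (nhds z)"
    by eventually_elim (simp add: rr_def psi_def)
  ultimately show ?thesis
    by (subst isCont_cong[OF ev])
qed

lemma sd_pos: "z > 0 \<Longrightarrow> sd z > 0"
  unfolding sd_def using rr_pos[of z] by simp

lemma sd_cont: "z > 0 \<Longrightarrow> isCont sd z"
  unfolding sd_def[abs_def] using rr_pos[of z] rr_cont[of z]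
  by (intro continuous_intros) auto

lemma sd_1: "sd 1 = 1" by (simp add: sd_def rr_def)

lemma sfun_deriv: "z > 0 \<Longrightarrow> (sfun has_real_derivative sd z) (at z)"
proof -
  assume z: "z > 0"
  consider "z = 1" | "z < 1" | "z > 1" by linarith
  thus ?thesis
  proof cases
    case 1
    have "((\<lambda>y. (sfun y - sfun 1) / (y - 1)) \<longlongrightarrow> 1) (at 1)"
    proof -
      have ev: "eventually (\<lambda>y. rr y = (sfun y - sfun 1) / (y - 1)) (at 1)"
        by (auto simp: eventually_at_filter sfun_def)
      show ?thesis using rr_lim by (subst tendsto_cong[OF ev, symmetric])
    qed
    thus ?thesis using 1 by (simp add: has_field_derivative_iff sd_1)
  next
    case 2
    have p: "psi z > 0" using psi_pos[of z] z 2 by auto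
    have d: "((\<lambda>y. - sqrt (2 * psi y)) has_real_derivative
        - ((1 - 1/z) / sqrt (2 * psi z))) (at z)"
      using p by (auto intro!: derivative_eq_intros psi_deriv z simp: field_simps)
    have "- ((1 - 1/z) / sqrt (2 * psi z)) = sd z"
    proof -
      have rrz: "rr z = sqrt (2 * psi z) / (1 - z)"
        using z 2 by (simp add: rr_def real_sqrt_divide power2_commute)
      have "sqrt (2 * psi z) > 0" using p by simp
      thus ?thesis using z 2 unfolding sd_def rrz by (simp add: field_simps)
    qed
    moreover have "eventually (\<lambda>y. - sqrt (2 * psi y) = sfun y) (nhds z)"
    proof -
      have "eventually (\<lambda>y. y \<in> {0<..<1}) (nhds z)"
        using z 2 by (intro eventually_nhds_in_open) auto
      thus ?thesis by eventually_elim (simp add: sfun_lt1)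
    qed
    ultimately show ?thesis using d DERIV_cong_ev[OF refl _ refl] by metis
  next
    case 3
    have p: "psi z > 0" using psi_pos[of z] z 3 by auto
    have d: "((\<lambda>y. sqrt (2 * psi y)) has_real_derivative
        ((1 - 1/z) / sqrt (2 * psi z))) (at z)"
      using p by (auto intro!: derivative_eq_intros psi_deriv z simp: field_simps)
    have "((1 - 1/z) / sqrt (2 * psi z)) = sd z"
    proof -
      have rrz: "rr z = sqrt (2 * psi z) / (z - 1)"
        using z 3 by (simp add: rr_def real_sqrt_divide)
      have "sqrt (2 * psi z) > 0" using p by simp
      thus ?thesis using z 3 unfolding sd_def rrz by (simp add: field_simps)
    qed
    moreover have "eventually (\<lambda>y. sqrt (2 * psi y) = sfun y) (nhds z)"
    proof -
      have "eventually (\<lambda>y. y \<in> {1<..}) (nhds z)"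
        using z 3 by (intro eventually_nhds_in_open) auto
      thus ?thesis by eventually_elim (simp add: sfun_ge1)
    qed
    ultimately show ?thesis using d DERIV_cong_ev[OF refl _ refl] by metis
  qed
qed

lemma sfun_at_top: "filterlim sfun at_top at_top"
proof -
  have "filterlim (\<lambda>z::real. sqrt (2*(z-1-ln z))) at_top at_top" by real_asymp
  moreover have "eventually (\<lambda>z. sqrt (2*(z-1-ln z)) = sfun z) at_top"
    using eventually_ge_at_top[of 1] by eventually_elim (simp add: sfun_ge1 psi_def)
  ultimately show ?thesis using filterlim_cong by fastforce
qed

lemma sd_near:
  assumes "e > 0"
  shows "\<exists>d>0. \<forall>z. \<bar>z - 1\<bar> < d \<longrightarrow> z > 0 \<and> \<bar>1/z - sd z\<bar> \<le> e * sd z"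
proof -
  have c1: "isCont (\<lambda>z. 1/z - sd z) 1" using sd_cont[of 1] by (intro continuous_intros) auto
  have c2: "isCont sd 1" using sd_cont[of 1] by simp
  have l1: "((\<lambda>z. 1/z - sd z) \<longlongrightarrow> 0) (at 1)" using c1 by (simp add: isCont_def sd_1)
  have l2: "(sd \<longlongrightarrow> 1) (at 1)" using c2 by (simp add: isCont_def sd_1)
  have ev1: "eventually (\<lambda>z. \<bar>1/z - sd z\<bar> < e/2) (at 1)"
  proof -
    have "((\<lambda>z. \<bar>1/z - sd z\<bar>) \<longlongrightarrow> 0) (at 1)" using tendsto_rabs[OF l1] by simp
    from order_tendstoD(2)[OF this, of "e/2"] assms show ?thesis by simp
  qed
  have ev2: "eventually (\<lambda>z. sd z > 1/2) (at 1)"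
    using order_tendstoD(1)[OF l2, of "1/2"] by simp
  have ev3: "eventually (\<lambda>z. z > 0) (at (1::real))"
    using order_tendstoD(1)[OF tendsto_ident_at[of "1::real" UNIV], of 0] by simp
  have "eventually (\<lambda>z. \<bar>1/z - sd z\<bar> < e/2 \<and> sd z > 1/2 \<and> z > 0) (at 1)"
    using ev1 ev2 ev3 by eventually_elim auto
  then obtain d where d: "d > 0" and dP: "\<And>z. z \<noteq> 1 \<Longrightarrow> dist z 1 < d \<Longrightarrow> \<bar>1/z - sd z\<bar> < e/2 \<and> sd z > 1/2 \<and> z > 0"
    unfolding eventually_at by blast
  have "\<forall>z. \<bar>z - 1\<bar> < min d 1 \<longrightarrow> z > 0 \<and> \<bar>1/z - sd z\<bar> \<le> e * sd z"
  proof (intro allI impI)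
    fix z :: real assume z: "\<bar>z - 1\<bar> < min d 1"
    show "z > 0 \<and> \<bar>1/z - sd z\<bar> \<le> e * sd z"
    proof (cases "z = 1")
      case True thus ?thesis using assms by (simp add: sd_1)
    next
      case False
      with dP[of z] z have h: "\<bar>1/z - sd z\<bar> < e/2" "sd z > 1/2" "z > 0" by (auto simp: dist_real_def)
      have "e/2 \<le> e * sd z" using h(2) assms by (simp add: field_simps)
      thus ?thesis using h by linarith
    qed
  qed
  thus ?thesis using d by (intro exI[of _ "min d 1"]) auto
qed

lemma psi_mono_ge1: "1 \<le> x \<Longrightarrow> x \<le> y \<Longrightarrow> psi x \<le> psi y"
proof (rule DERIV_nonneg_imp_nondecreasing[of x y psi])
  fix t assume "x \<le> t" "t \<le> y" "1 \<le> x"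
  thus "\<exists>y. DERIV psi t :> y \<and> 0 \<le> y"
    using psi_deriv[of t] by (intro exI[of _ "1 - 1/t"]) (auto simp: field_simps)
qed

lemma psi_mono_le1: "0 < x \<Longrightarrow> x \<le> y \<Longrightarrow> y \<le> 1 \<Longrightarrow> psi y \<le> psi x"
proof (rule DERIV_nonpos_imp_nonincreasing[of x y psi])
  fix t assume "x \<le> t" "t \<le> y" "0 < x" "y \<le> 1"
  thus "\<exists>y. DERIV psi t :> y \<and> y \<le> 0"
    using psi_deriv[of t] by (intro exI[of _ "1 - 1/t"]) (auto simp: field_simps)
qed

lemma psi_far:
  assumes "0 < d" "d < 1"
  shows "\<exists>c>0. \<forall>z>0. \<bar>z - 1\<bar> \<ge> d \<longrightarrow> psi z \<ge> c"
proof -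
  let ?c = "min (psi (1-d)) (psi (1+d))"
  have "?c > 0" using assms psi_pos[of "1-d"] psi_pos[of "1+d"] by auto
  moreover have "psi z \<ge> ?c" if "z > 0" "\<bar>z - 1\<bar> \<ge> d" for z
  proof (cases "z \<ge> 1")
    case True
    hence "z \<ge> 1 + d" using that by auto
    thus ?thesis using psi_mono_ge1[of "1+d" z] assms by auto
  next
    case False
    hence "z \<le> 1 - d" using that by auto
    thus ?thesis using psi_mono_le1[of z "1-d"] assms that by auto
  qed
  ultimately show ?thesis by blast
qed

lemma Phi_deriv_chain [derivative_intros]:
  "(f has_real_derivative f') (at x within S) \<Longrightarrow>
   ((\<lambda>x. Phi (f x)) has_real_derivative phi (f x) * f') (at x within S)"
  by (rule DERIV_chain2[OF Phi_deriv])

lemma sfun_deriv_chain: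
  "(g has_real_derivative g') (at x) \<Longrightarrow> g x > 0 \<Longrightarrow>
   ((\<lambda>x. sfun (g x)) has_real_derivative sd (g x) * g') (at x)"
  by (rule DERIV_chain2[OF sfun_deriv])

lemma phi_sfun: "z > 0 \<Longrightarrow> n \<ge> 0 \<Longrightarrow> phi (- (sqrt n * sfun z)) = exp (- n * psi z) / sqrt (2*pi)"
proof -
  assume z: "z > 0" and n: "n \<ge> 0"
  have "(- (sqrt n * sfun z))^2 = n * (2 * psi z)"
    using sfun_sq[OF z] n by (simp add: power_mult_distrib)
  thus ?thesis unfolding phi_def by simp
qed

lemma gauss_int:
  fixes n \<rho> :: real
  assumes n: "n > 0" and r: "0 < \<rho>" "\<rho> < 1"
  shows "set_integrable lborel {0<..} (\<lambda>t. exp (- n * psi (\<rho>*(1+t))) * (\<rho> * sd (\<rho>*(1+t))))"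
    and "(LBINT t:{0<..}. exp (- n * psi (\<rho>*(1+t))) * (\<rho> * sd (\<rho>*(1+t))))
          = sqrt (2*pi) / sqrt n * Phi (sqrt n * sqrt (2 * psi \<rho>))"
proof -
  define f where "f = (\<lambda>t. exp (- n * psi (\<rho>*(1+t))) * (\<rho> * sd (\<rho>*(1+t))))"
  define c where "c = sqrt (2*pi) / sqrt n"
  define F where "F = (\<lambda>t. - c * Phi (- (sqrt n * sfun (\<rho>*(1+t)))))"
  have deriv: "DERIV F t :> f t" if t: "t > -1" for t
  proof -
    have z: "\<rho>*(1+t) > 0" using t r by simp
    have d0: "((\<lambda>t. \<rho>*(1+t)) has_real_derivative \<rho>) (at t)"
      by (auto intro!: derivative_eq_intros)
    have d1: "((\<lambda>t. sfun (\<rho>*(1+t))) has_real_derivative sd (\<rho>*(1+t)) * \<rho>) (at t)"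
      by (rule sfun_deriv_chain[OF d0 z])
    note d2 = DERIV_cmult[OF DERIV_chain2[OF Phi_deriv DERIV_minus[OF DERIV_cmult[OF d1, of "sqrt n"]]], of "- c"]
    show ?thesis unfolding F_def
    proof (rule DERIV_cong[OF d2])
      show "- c * (phi (- (sqrt n * sfun (\<rho> * (1 + t)))) * - (sqrt n * (sd (\<rho> * (1 + t)) * \<rho>))) = f t"
        unfolding f_def c_def phi_sfun[OF z less_imp_le[OF n]] using n by (simp add: field_simps)
    qed
  qed
  have fcont: "isCont f t" if t: "t > -1" for t
  proof -
    have z: "\<rho>*(1+t) > 0" using t r by simp
    have "isCont (\<lambda>t. \<rho>*(1+t)) t" by simp
    from isCont_o2[OF this sd_cont[OF z]] have "isCont (\<lambda>t. sd (\<rho>*(1+t))) t" .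
    moreover have "isCont (\<lambda>t. psi (\<rho>*(1+t))) t"
      unfolding psi_def using z by (intro continuous_intros) auto
    ultimately show ?thesis unfolding f_def by (intro continuous_intros)
  qed
  have fnn: "f t \<ge> 0" if "t > -1" for t
    unfolding f_def using sd_pos[of "\<rho>*(1+t)"] that r by (auto intro!: mult_nonneg_nonneg)
  have lim0: "((F \<circ> real_of_ereal) \<longlongrightarrow> F 0) (at_right 0)"
  proof -
    have "isCont F 0" using deriv[of 0] DERIV_isCont by simp
    hence "(F \<longlongrightarrow> F 0) (at_right 0)" by (simp add: isCont_def filterlim_at_split)
    thus ?thesis by (simp add: zero_ereal_def ereal_tendsto_simps)
  qed
  have liminf: "((F \<circ> real_of_ereal) \<longlongrightarrow> 0) (at_left \<infinity>)"
  proof -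
    have "filterlim (\<lambda>t. \<rho>*(1+t)) at_top at_top"
      using r by real_asymp
    hence "filterlim (\<lambda>t. sfun (\<rho>*(1+t))) at_top at_top"
      using sfun_at_top filterlim_compose by blast
    hence "filterlim (\<lambda>t. sqrt n * sfun (\<rho>*(1+t))) at_top at_top"
      using n by (intro filterlim_tendsto_pos_mult_at_top[OF tendsto_const]) auto
    hence "filterlim (\<lambda>t. - (sqrt n * sfun (\<rho>*(1+t)))) at_bot at_top"
      by (simp add: filterlim_uminus_at_top)
    hence "((\<lambda>t. Phi (- (sqrt n * sfun (\<rho>*(1+t))))) \<longlongrightarrow> 0) at_top"
      using Phi_at_bot filterlim_compose by blast
    hence "(F \<longlongrightarrow> - c * 0) at_top" unfolding F_def by (intro tendsto_intros)
    thus ?thesis by (simp add: ereal_tendsto_simps)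
  qed
  have F0: "F 0 = - c * Phi (sqrt n * sqrt (2 * psi \<rho>))"
    unfolding F_def using sfun_lt1[OF r] by simp
  have ae: "AE x in lborel. 0 < ereal x \<longrightarrow> ereal x < \<infinity> \<longrightarrow> 0 \<le> f x"
    by (rule AE_I2) (auto intro: fnn)
  have res: "set_integrable lborel (einterval 0 \<infinity>) f" "(LBINT t=0..\<infinity>. f t) = 0 - F 0"
    using interval_integral_FTC_nonneg[of 0 \<infinity> F f, OF _ _ _ ae lim0 liminf] deriv fcont
    by (auto simp: zero_ereal_def)
  show "set_integrable lborel {0<..} f" using res(1) by (simp add: zero_ereal_def)
  show "(LBINT t:{0<..}. f t) = sqrt (2*pi) / sqrt n * Phi (sqrt n * sqrt (2 * psi \<rho>))"
    using res(2) F0 by (simp add: interval_lebesgue_integral_0_infty c_def)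
qed

lemma E1:
  fixes \<rho> :: real
  assumes r: "\<rho> > 0"
  shows "set_integrable lborel {0<..} (\<lambda>t. \<rho> * exp (1 - \<rho>*(1+t)))"
    and "(LBINT t:{0<..}. \<rho> * exp (1 - \<rho>*(1+t))) = exp (1 - \<rho>)"
proof -
  define F where "F = (\<lambda>t. - exp (1 - \<rho>*(1+t)))"
  have d: "DERIV F t :> \<rho> * exp (1 - \<rho>*(1+t))" for t
    unfolding F_def by (auto intro!: derivative_eq_intros)
  have l0: "((F \<circ> real_of_ereal) \<longlongrightarrow> F 0) (at_right 0)"
    unfolding F_def by (auto simp: zero_ereal_def ereal_tendsto_simps intro!: tendsto_eq_intros)
  have li: "((F \<circ> real_of_ereal) \<longlongrightarrow> 0) (at_left \<infinity>)"
    unfolding F_def ereal_tendsto_simps using r by real_asymp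
  have ae: "AE x in lborel. 0 < ereal x \<longrightarrow> ereal x < \<infinity> \<longrightarrow> 0 \<le> \<rho> * exp (1 - \<rho>*(1+x))"
    using r by (intro AE_I2) auto
  have res: "set_integrable lborel (einterval 0 \<infinity>) (\<lambda>t. \<rho> * exp (1 - \<rho>*(1+t)))"
     "(LBINT t=0..\<infinity>. \<rho> * exp (1 - \<rho>*(1+t))) = 0 - F 0"
    using interval_integral_FTC_nonneg[of 0 \<infinity> F, OF _ _ _ ae l0 li] d
    by (auto simp: zero_ereal_def)
  show "set_integrable lborel {0<..} (\<lambda>t. \<rho> * exp (1 - \<rho>*(1+t)))" using res(1) by (simp add: zero_ereal_def)
  show "(LBINT t:{0<..}. \<rho> * exp (1 - \<rho>*(1+t))) = exp (1 - \<rho>)"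
    using res(2) by (simp add: interval_lebesgue_integral_0_infty F_def)
qed

lemma E2:
  fixes \<rho> :: real
  assumes r: "\<rho> > 0"
  shows "set_integrable lborel {0<..} (\<lambda>t. (1+t) * exp (1 - \<rho>*(1+t)))"
proof -
  define F where "F = (\<lambda>t. - (1+t) * exp (1 - \<rho>*(1+t)) / \<rho> - exp (1 - \<rho>*(1+t)) / \<rho>^2)"
  have d: "DERIV F t :> (1+t) * exp (1 - \<rho>*(1+t))" for t
    unfolding F_def using r by (auto intro!: derivative_eq_intros simp: field_simps power2_eq_square)
  have l0: "((F \<circ> real_of_ereal) \<longlongrightarrow> F 0) (at_right 0)"
    unfolding F_def using r by (auto simp: zero_ereal_def ereal_tendsto_simps intro!: tendsto_eq_intros)
  have li: "((F \<circ> real_of_ereal) \<longlongrightarrow> 0) (at_left \<infinity>)"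
    unfolding F_def ereal_tendsto_simps using r by real_asymp
  have ae: "AE x in lborel. 0 < ereal x \<longrightarrow> ereal x < \<infinity> \<longrightarrow> 0 \<le> (1+x) * exp (1 - \<rho>*(1+x))"
    using r by (intro AE_I2) auto
  have res: "set_integrable lborel (einterval 0 \<infinity>) (\<lambda>t. (1+t) * exp (1 - \<rho>*(1+t)))"
    using interval_integral_FTC_nonneg[of 0 \<infinity> F, OF _ _ _ ae l0 li] d
    by (auto simp: zero_ereal_def)
  thus ?thesis by (simp add: zero_ereal_def)
qed

lemma exp_mpsi: "z > 0 \<Longrightarrow> exp (- psi z) = z * exp (1 - z)"
  unfolding psi_def by (simp add: exp_diff exp_minus exp_add field_simps)

lemma powr_exp_psi:
  fixes n \<rho> t :: real
  assumes "t > -1" "\<rho> > 0"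
  shows "(1+t) powr n * exp (- (n*\<rho>) * t) = exp (n * psi \<rho>) * exp (- n * psi (\<rho>*(1+t)))"
proof -
  have "ln (\<rho>*(1+t)) = ln \<rho> + ln (1+t)" using assms by (simp add: ln_mult)
  hence "n * psi \<rho> + (- n * psi (\<rho>*(1+t))) = n * ln (1+t) + (- (n*\<rho>) * t)"
    unfolding psi_def by (simp add: algebra_simps)
  hence "exp (n * psi \<rho>) * exp (- n * psi (\<rho>*(1+t))) = exp (n * ln (1+t)) * exp (- (n*\<rho>) * t)"
    by (metis exp_add)
  thus ?thesis using assms by (simp add: powr_def)
qed

lemma exp_npsi_le: "z > 0 \<Longrightarrow> n \<ge> 1 \<Longrightarrow> exp (- n * psi z) \<le> exp (- psi z)"
  using psi_nonneg[of z] by (simp add: mult_le_cancel_right1)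

lemma sbm_cont:
  fixes f :: "real \<Rightarrow> real"
  assumes "continuous_on {0<..} f"
  shows "set_borel_measurable lborel {0<..} f"
  unfolding set_borel_measurable_def
  using borel_measurable_continuous_on_indicator[of "{0<..}" f] assms by simp

lemma si_bound:
  fixes f g :: "real \<Rightarrow> real"
  assumes "set_integrable lborel {0<..} g" "continuous_on {0<..} f"
    "\<And>t. t > 0 \<Longrightarrow> \<bar>f t\<bar> \<le> g t"
  shows "set_integrable lborel {0<..} f"
proof (rule set_integrable_bound[OF assms(1) sbm_cont[OF assms(2)]])
  show "AE x in lborel. x \<in> {0<..} \<longrightarrow> norm (f x) \<le> norm (g x)"
    using assms(3) by (intro AE_I2) force
qed

lemma cont_on_pos: "(\<And>t. t > 0 \<Longrightarrow> isCont f t) \<Longrightarrow> continuous_on {0<..} f"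
  by (intro continuous_at_imp_continuous_on) auto

lemma alpha_int:
  fixes n \<rho> :: real
  assumes n: "n \<ge> 1" and r: "0 < \<rho>" "\<rho> < 1"
  shows "set_integrable lborel {0<..} (\<lambda>t. (1+t) powr (n-1) * exp (- (n*\<rho>) * t))"
    and "(n*\<rho>) * (LBINT t:{0..}. t * exp (- (n*\<rho>) * t) * (1+t) powr (n-1))
         = 1 + (n - n*\<rho>) * (LBINT t:{0<..}. (1+t) powr (n-1) * exp (- (n*\<rho>) * t))"
proof -
  define lam where "lam = n*\<rho>"
  have lam: "lam > 0" using n r by (simp add: lam_def)
  define K where "K = exp (n * psi \<rho>)"
  define g0 where "g0 = (\<lambda>t::real. (1+t) powr n * exp (- lam * t))"
  define g1 where "g1 = (\<lambda>t::real. (1+t) powr (n-1) * exp (- lam * t))"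
  define tg where "tg = (\<lambda>t::real. t * exp (- lam * t) * (1+t) powr (n-1))"
  have pm: "(1+t) * (1+t) powr (n-1) = (1+t) powr n" if "t > -1" for t :: real
    using powr_mult_base[of "1+t" "n-1"] that by simp
  have g0b: "\<bar>g0 t\<bar> \<le> (K*\<rho>) * ((1+t) * exp (1 - \<rho>*(1+t)))" if t: "t > 0" for t
  proof -
    have z: "\<rho>*(1+t) > 0" using t r by simp
    have "g0 t = K * exp (- n * psi (\<rho>*(1+t)))"
      unfolding g0_def K_def lam_def using powr_exp_psi[of t \<rho> n] t r by simp
    also have "\<dots> \<le> K * exp (- psi (\<rho>*(1+t)))"
      using exp_npsi_le[OF z n] by (simp add: K_def)
    also have "\<dots> = (K*\<rho>) * ((1+t) * exp (1 - \<rho>*(1+t)))"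
      using exp_mpsi[OF z] by simp
    finally show ?thesis unfolding g0_def by simp
  qed
  have c0: "continuous_on {0<..} g0" unfolding g0_def
    by (intro cont_on_pos continuous_intros) auto
  have c1: "continuous_on {0<..} g1" unfolding g1_def
    by (intro cont_on_pos continuous_intros) auto
  have ctg: "continuous_on {0<..} tg" unfolding tg_def
    by (intro cont_on_pos continuous_intros) auto
  have i0: "set_integrable lborel {0<..} g0"
    by (rule si_bound[OF _ c0 g0b]) (use E2[OF r(1)] in simp)
  have g1b: "\<bar>g1 t\<bar> \<le> g0 t" if t: "t > 0" for t
  proof -
    have "(1+t) powr (n-1) \<le> (1+t) powr n" using t by (intro powr_mono) auto
    thus ?thesis unfolding g0_def g1_def by (simp add: abs_mult)
  qed
  have i1: "set_integrable lborel {0<..} g1" by (rule si_bound[OF i0 c1 g1b])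
  have tgb: "\<bar>tg t\<bar> \<le> g0 t" if t: "t > 0" for t
  proof -
    have "t * (1+t) powr (n-1) \<le> (1+t) * (1+t) powr (n-1)" using t by (intro mult_right_mono) auto
    hence "t * (1+t) powr (n-1) \<le> (1+t) powr n" using pm[of t] t by simp
    thus ?thesis unfolding g0_def tg_def using t by (simp add: abs_mult mult_ac)
  qed
  define H where "H = (\<lambda>t::real. - ((1+t) powr n * exp (- lam * t)))"
  define h where "h = (\<lambda>t. lam * g0 t - n * g1 t)"
  have dH: "(H has_real_derivative h t) (at t)" if t: "t > -1" for t
  proof -
    have "(H has_real_derivative - (n * (1+t) powr (n-1) * 1 * exp (- lam * t) + (1+t) powr n * (exp (- lam * t) * (- lam * 1)))) (at t)"
      unfolding H_def using t by (intro derivative_eq_intros refl) auto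
    thus ?thesis by (rule DERIV_cong) (simp add: h_def g0_def g1_def algebra_simps)
  qed
  have ih: "set_integrable lborel {0<..} h" unfolding h_def using i0 i1
    by (intro set_integral_diff set_integrable_mult_right) auto
  have hcont: "isCont h t" if "t > 0" for t
    unfolding h_def g0_def g1_def using that by (intro continuous_intros) auto
  have l0: "((H \<circ> real_of_ereal) \<longlongrightarrow> H 0) (at_right 0)"
    unfolding H_def by (auto simp: zero_ereal_def ereal_tendsto_simps intro!: tendsto_eq_intros)
  have li: "((H \<circ> real_of_ereal) \<longlongrightarrow> 0) (at_left \<infinity>)"
    unfolding H_def ereal_tendsto_simps using lam by real_asymp
  have "(LBINT t=0..\<infinity>. h t) = 0 - H 0"
    by (rule interval_integral_FTC_integrable[OF _ _ _ _ l0 li])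
       (use dH hcont ih in \<open>auto simp: zero_ereal_def has_real_derivative_iff_has_vector_derivative[symmetric]\<close>)
  hence Ih: "(LBINT t:{0<..}. h t) = 1"
    by (simp add: interval_lebesgue_integral_0_infty H_def)
  have "(LBINT t:{0..}. tg t) = (LBINT t:{0<..}. tg t)"
    unfolding set_lebesgue_integral_def
    by (rule Bochner_Integration.integral_cong) (auto simp: indicator_def tg_def)
  hence "lam * (LBINT t:{0..}. tg t) = (LBINT t:{0<..}. lam * tg t)" by simp
  also have "\<dots> = (LBINT t:{0<..}. h t + (n - lam) * g1 t)"
  proof -
    have pw: "lam * tg t = h t + (n - lam) * g1 t" if t: "t > 0" for t
    proof -
      have "(1+t) powr n = (1+t) * (1+t) powr (n-1)" using pm[of t] t by simp
      thus ?thesis unfolding h_def g0_def g1_def tg_def by (simp add: algebra_simps)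
    qed
    show ?thesis by (rule set_lebesgue_integral_cong) (auto simp: pw)
  qed
  also have "\<dots> = (LBINT t:{0<..}. h t) + (n - lam) * (LBINT t:{0<..}. g1 t)"
    using ih i1 by (subst set_integral_add) auto
  finally show "(n*\<rho>) * (LBINT t:{0..}. t * exp (- (n*\<rho>) * t) * (1+t) powr (n-1))
         = 1 + (n - n*\<rho>) * (LBINT t:{0<..}. (1+t) powr (n-1) * exp (- (n*\<rho>) * t))"
    using Ih unfolding lam_def tg_def g1_def by simp
  show "set_integrable lborel {0<..} (\<lambda>t. (1+t) powr (n-1) * exp (- (n*\<rho>) * t))"
    using i1 unfolding g1_def lam_def .
qed

definition Ia where "Ia n \<rho> = (LBINT t:{0<..}. exp (- n * psi (\<rho>*(1+t))) * (\<rho> * sd (\<rho>*(1+t))))"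
definition Ib where "Ib n \<rho> = (LBINT t:{0<..}. exp (- n * psi (\<rho>*(1+t))) / (1+t))"

lemma B1_eq: "t > -1 \<Longrightarrow> \<rho> > 0 \<Longrightarrow> exp (- psi (\<rho>*(1+t))) / (1+t) = \<rho> * exp (1 - \<rho>*(1+t))"
  using exp_mpsi[of "\<rho>*(1+t)"] by simp

lemma Ib_int:
  fixes n \<rho> :: real
  assumes n: "n \<ge> 1" and r: "0 < \<rho>"
  shows "set_integrable lborel {0<..} (\<lambda>t. exp (- n * psi (\<rho>*(1+t))) / (1+t))"
proof (rule si_bound[OF E1(1)[OF r]])
  show "continuous_on {0<..} (\<lambda>t. exp (- n * psi (\<rho>*(1+t))) / (1+t))"
    unfolding psi_def using r by (intro cont_on_pos continuous_intros) auto
  fix t :: real assume t: "t > 0"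
  have z: "\<rho>*(1+t) > 0" using t r by simp
  have "exp (- n * psi (\<rho>*(1+t))) / (1+t) \<le> exp (- psi (\<rho>*(1+t))) / (1+t)"
    using exp_npsi_le[OF z n] t by (intro divide_right_mono) auto
  thus "\<bar>exp (- n * psi (\<rho>*(1+t))) / (1+t)\<bar> \<le> \<rho> * exp (1 - \<rho>*(1+t))"
    using B1_eq[of t \<rho>] t r by simp
qed

lemma Ib1: "0 < \<rho> \<Longrightarrow> Ib 1 \<rho> = exp (1 - \<rho>)"
proof -
  assume r: "0 < \<rho>"
  have "Ib 1 \<rho> = (LBINT t:{0<..}. \<rho> * exp (1 - \<rho>*(1+t)))"
    unfolding Ib_def by (rule set_lebesgue_integral_cong) (use B1_eq r in auto)
  thus ?thesis using E1(2)[OF r] by simp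
qed

lemma Ia_eq: "n > 0 \<Longrightarrow> 0 < \<rho> \<Longrightarrow> \<rho> < 1 \<Longrightarrow> Ia n \<rho> = sqrt (2*pi) / sqrt n * Phi (sqrt n * sqrt (2 * psi \<rho>))"
  unfolding Ia_def by (rule gauss_int(2))

lemma key:
  assumes e: "e > 0"
  shows "\<exists>N. \<forall>n \<rho>. n \<ge> N \<longrightarrow> 0 < \<rho> \<longrightarrow> \<rho> < 1 \<longrightarrow> \<bar>Ib n \<rho> - Ia n \<rho>\<bar> \<le> e * Ia n \<rho>"
proof -
  obtain d0 where d0: "d0 > 0" "\<And>z. \<bar>z - 1\<bar> < d0 \<Longrightarrow> z > 0 \<and> \<bar>1/z - sd z\<bar> \<le> (e/2) * sd z"
    using sd_near[of "e/2"] e by auto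
  define d where "d = min d0 (1/2)"
  have d: "0 < d" "d < 1" using d0 by (auto simp: d_def)
  have dn: "\<bar>z - 1\<bar> < d \<Longrightarrow> z > 0 \<and> \<bar>1/z - sd z\<bar> \<le> (e/2) * sd z" for z
    using d0(2)[of z] by (auto simp: d_def)
  obtain c where c: "c > 0" "\<And>z. z > 0 \<Longrightarrow> \<bar>z - 1\<bar> \<ge> d \<Longrightarrow> psi z \<ge> c"
    using psi_far[OF d] by auto
  define CP where "CP = (LINT t|lborel. phi t)"
  define M where "M = exp 1 + sqrt (2*pi) * CP"
  have M: "M \<ge> 0" unfolding M_def CP_def using Phi_le[of 0] Phi_nonneg[of 0] by simp
  define L where "L = (e/2) * sqrt (2*pi) * Phi 0"
  have L: "L > 0" unfolding L_def using e Phi_0_pos by simp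
  have "((\<lambda>n::real. exp (-(n-1)*c) * sqrt n) \<longlongrightarrow> 0) at_top" using c(1) by real_asymp
  hence "((\<lambda>n::real. exp (-(n-1)*c) * sqrt n * M) \<longlongrightarrow> 0 * M) at_top" by (intro tendsto_intros)
  hence "eventually (\<lambda>n::real. exp (-(n-1)*c) * sqrt n * M < L) at_top"
    using L by (intro order_tendstoD) auto
  then obtain N0 where N0: "\<And>n. n \<ge> N0 \<Longrightarrow> exp (-(n-1)*c) * sqrt n * M < L"
    unfolding eventually_at_top_linorder by auto
  define N where "N = max N0 1"
  have "\<bar>Ib n \<rho> - Ia n \<rho>\<bar> \<le> e * Ia n \<rho>" if nN: "n \<ge> N" and r: "0 < \<rho>" "\<rho> < 1" for n \<rho>
  proof -
    have n1: "n \<ge> 1" using nN by (simp add: N_def)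
    have n0: "n > 0" using n1 by simp
    define A where "A = (\<lambda>t. exp (- n * psi (\<rho>*(1+t))) * (\<rho> * sd (\<rho>*(1+t))))"
    define A1 where "A1 = (\<lambda>t. exp (- 1 * psi (\<rho>*(1+t))) * (\<rho> * sd (\<rho>*(1+t))))"
    define B where "B = (\<lambda>t. exp (- n * psi (\<rho>*(1+t))) / (1+t))"
    define B1 where "B1 = (\<lambda>t. exp (- 1 * psi (\<rho>*(1+t))) / (1+t))"
    define q where "q = exp (-(n-1)*c)"
    define bnd where "bnd = (\<lambda>t. (e/2) * A t + q * (B1 t + A1 t))"
    have iA: "set_integrable lborel {0<..} A" unfolding A_def by (rule gauss_int(1)[OF n0 r])
    have iA1: "set_integrable lborel {0<..} A1" unfolding A1_def by (rule gauss_int(1)) (use r in auto)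
    have iB: "set_integrable lborel {0<..} B" unfolding B_def by (rule Ib_int[OF n1 r(1)])
    have iB1: "set_integrable lborel {0<..} B1" unfolding B1_def by (rule Ib_int) (use r in auto)
    have ibnd: "set_integrable lborel {0<..} bnd" unfolding bnd_def using iA iA1 iB1
      by (intro set_integral_add set_integrable_mult_right) auto
    have iD: "set_integrable lborel {0<..} (\<lambda>t. B t - A t)" using iA iB by (intro set_integral_diff)
    have pw: "\<bar>B t - A t\<bar> \<le> bnd t" if t: "t > 0" for t
    proof -
      define z where "z = \<rho>*(1+t)"
      have z: "z > 0" using t r by (simp add: z_def)
      have sdp: "sd z > 0" using sd_pos[OF z] .
      have inv: "1/(1+t) = \<rho> * (1/z)" using r by (simp add: z_def)
      have eq: "B t - A t = exp (- n * psi z) * \<rho> * (1/z - sd z)"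
      proof -
        have "B t - A t = exp (- n * psi z) * (1/(1+t)) - exp (- n * psi z) * (\<rho> * sd z)"
          unfolding A_def B_def z_def by simp
        also have "\<dots> = exp (- n * psi z) * \<rho> * (1/z - sd z)" unfolding inv by (simp add: algebra_simps)
        finally show ?thesis .
      qed
      have nn: "A t \<ge> 0" "A1 t \<ge> 0" "B1 t \<ge> 0" "q \<ge> 0"
        unfolding A_def A1_def B1_def q_def using sdp r t by (auto simp: z_def)
      show ?thesis
      proof (cases "\<bar>z - 1\<bar> < d")
        case True
        hence "\<bar>1/z - sd z\<bar> \<le> (e/2) * sd z" using dn by blast
        hence "\<bar>B t - A t\<bar> \<le> exp (- n * psi z) * \<rho> * ((e/2) * sd z)"
          unfolding eq using r by (simp add: abs_mult mult_left_mono)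
        also have "\<dots> = (e/2) * A t" unfolding A_def z_def by simp
        finally have "\<bar>B t - A t\<bar> \<le> (e/2) * A t" .
        moreover have "q * (B1 t + A1 t) \<ge> 0" using nn by simp
        ultimately show ?thesis unfolding bnd_def by linarith
      next
        case False
        hence pc: "psi z \<ge> c" using c(2)[OF z] by simp
        have "exp (- n * psi z) = exp (-(n-1) * psi z) * exp (- 1 * psi z)"
          by (simp flip: exp_add) (simp add: algebra_simps)
        also have "\<dots> \<le> q * exp (- 1 * psi z)" unfolding q_def
          using pc n1 by (intro mult_right_mono) (auto simp: mult_le_cancel_left)
        finally have ex: "exp (- n * psi z) \<le> q * exp (- 1 * psi z)" .
        have "1/z > 0" using z by simp
        hence "\<bar>1/z - sd z\<bar> \<le> 1/z + sd z" using sdp by (simp add: abs_le_iff)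
        hence "\<bar>B t - A t\<bar> \<le> exp (- n * psi z) * \<rho> * (1/z + sd z)"
          unfolding eq using r z sdp by (simp add: abs_mult mult_left_mono)
        also have "\<dots> \<le> q * exp (- 1 * psi z) * \<rho> * (1/z + sd z)"
          using ex r z sdp by (intro mult_right_mono) auto
        also have "\<dots> = q * (exp (- 1 * psi z) * (\<rho> * (1/z)) + exp (- 1 * psi z) * (\<rho> * sd z))"
          by (simp add: algebra_simps)
        also have "\<dots> = q * (B1 t + A1 t)"
          unfolding B1_def A1_def inv[symmetric] z_def using r by simp
        finally have "\<bar>B t - A t\<bar> \<le> q * (B1 t + A1 t)" .
        moreover have "(e/2) * A t \<ge> 0" using nn e by simp
        ultimately show ?thesis unfolding bnd_def by linarith
      qed
    qed
    have "(LBINT t:{0<..}. B t - A t) \<le> (LBINT t:{0<..}. bnd t)"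
      using pw by (intro set_integral_mono iD ibnd) force
    moreover have "(LBINT t:{0<..}. A t - B t) \<le> (LBINT t:{0<..}. bnd t)"
      using pw iA iB by (intro set_integral_mono ibnd set_integral_diff) (auto simp: abs_le_iff)
    moreover have "(LBINT t:{0<..}. B t - A t) = Ib n \<rho> - Ia n \<rho>"
      using iA iB unfolding Ia_def Ib_def A_def B_def by (simp add: set_integral_diff)
    moreover have "(LBINT t:{0<..}. A t - B t) = Ia n \<rho> - Ib n \<rho>"
      using iA iB unfolding Ia_def Ib_def A_def B_def by (simp add: set_integral_diff)
    ultimately have absD: "\<bar>Ib n \<rho> - Ia n \<rho>\<bar> \<le> (LBINT t:{0<..}. bnd t)"
      by (simp add: abs_le_iff)
    have Ibnd: "(LBINT t:{0<..}. bnd t) = (e/2) * Ia n \<rho> + q * (Ib 1 \<rho> + Ia 1 \<rho>)"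
      unfolding bnd_def Ia_def Ib_def A_def A1_def B1_def using iA iA1 iB1 
      by (simp add: set_integral_add set_integrable_mult_right A_def A1_def B1_def)
    have "Ib 1 \<rho> + Ia 1 \<rho> \<le> M"
    proof -
      have "Ib 1 \<rho> \<le> exp 1" using Ib1[OF r(1)] r by simp
      moreover have "Ia 1 \<rho> \<le> sqrt (2*pi) * CP"
        using Ia_eq[of 1 \<rho>] r Phi_le unfolding CP_def by simp
      ultimately show ?thesis unfolding M_def by simp
    qed
    hence "q * (Ib 1 \<rho> + Ia 1 \<rho>) \<le> q * M" by (simp add: q_def)
    also have "q * M \<le> L / sqrt n"
      using N0[of n] nN n0 by (simp add: N_def q_def field_simps)
    also have "L / sqrt n \<le> (e/2) * Ia n \<rho>"
    proof -
      have "Phi 0 \<le> Phi (sqrt n * sqrt (2 * psi \<rho>))" using psi_nonneg[of \<rho>] r n0 by (intro Phi_mono) simp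
      thus ?thesis unfolding L_def using Ia_eq[OF n0 r] e n0 by (simp add: field_simps)
    qed
    finally show ?thesis using absD Ibnd by linarith
  qed
  thus ?thesis by blast
qed

lemma inv_diff:
  fixes X Y e :: real
  assumes "X \<ge> 0" "Y \<ge> 0" "\<bar>X - Y\<bar> \<le> e * Y" "e \<ge> 0"
  shows "\<bar>inverse (1 + X) - inverse (1 + Y)\<bar> \<le> e"
proof -
  have "inverse (1 + X) - inverse (1 + Y) = (Y - X) / ((1+X)*(1+Y))"
    using assms by (simp add: field_simps)
  hence "\<bar>inverse (1 + X) - inverse (1 + Y)\<bar> = \<bar>X - Y\<bar> / ((1+X)*(1+Y))"
    using assms by (simp add: abs_minus_commute)
  also have "\<dots> \<le> e * Y / ((1+X)*(1+Y))"
    using assms by (intro divide_right_mono) auto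
  also have "\<dots> \<le> e * Y / (1+Y)"
    using assms by (intro divide_left_mono) (auto intro!: mult_nonneg_nonneg simp: mult_pos_pos)
  also have "\<dots> \<le> e" using assms by (simp add: field_simps)
  finally show ?thesis .
qed

lemma approx_final:
  fixes F W E n m eta :: real
  assumes FW: "\<bar>F - W\<bar> \<le> (eta/4) * W" and E: "0 \<le> E" "E \<le> (eta/8) * W"
    and n3: "1/(3*n) \<le> (eta/8) * W" and n: "n > 0" and W: "W > 0" and eta: "eta > 0" "eta \<le> 1"
    and F: "F \<ge> 0" and m: "m \<ge> 0"
  shows "\<bar>inverse (1 + m * F) - inverse (1 + m * (W - 1/(3*n) + E))\<bar> \<le> eta"
proof (rule inv_diff)
  define T where "T = 1/(3*n)"
  have T: "T \<ge> 0" "T \<le> (eta/8) * W" using n n3 by (auto simp: T_def)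
  have w8: "(eta/8) * W \<le> W/8" using eta W by (simp add: field_simps)
  have V: "W - T + E \<ge> W/2" using T E w8 by linarith
  show "m * F \<ge> 0" using m F by simp
  show "m * (W - 1/(3*n) + E) \<ge> 0" using V W m unfolding T_def[symmetric] by (intro mult_nonneg_nonneg) auto
  have "\<bar>F - (W - T + E)\<bar> \<le> \<bar>F - W\<bar> + T + E" using T E by linarith
  also have "\<dots> \<le> (eta/4) * W + (eta/8) * W + (eta/8) * W" using FW T E by linarith
  also have "\<dots> = (eta/2) * (W/2) * 2" by simp
  also have "\<dots> \<le> eta * (W - T + E)"
  proof -
    have "eta * (W/2) \<le> eta * (W - T + E)" using V eta by (intro mult_left_mono) auto
    thus ?thesis by (simp add: mult.commute)
  qed
  finally have h: "\<bar>F - (W - T + E)\<bar> \<le> eta * (W - T + E)" .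
  have "m * \<bar>F - (W - T + E)\<bar> \<le> m * (eta * (W - T + E))"
    using h m by (rule mult_left_mono)
  moreover have "\<bar>m * F - m * (W - T + E)\<bar> = m * \<bar>F - (W - T + E)\<bar>"
    using m by (simp add: abs_mult right_diff_distrib[symmetric])
  ultimately show "\<bar>m * F - m * (W - 1/(3*n) + E)\<bar> \<le> eta * (m * (W - 1/(3*n) + E))"
    unfolding T_def[symmetric] by (simp add: mult_ac)
  show "eta \<ge> 0" using eta by simp
qed

lemma algUB: "(s::real) > 0 \<Longrightarrow> l/(s^2) + (s^2 - l)/s * (s*w + 2/(3* s)) = 1 + (s^2 - l)*(w - 1/(3* s^2) + 0)"
  by (simp add: field_simps power2_eq_square)
lemma algLB: "(s::real) > 0 \<Longrightarrow> k > 0 \<Longrightarrow> p > 0 \<Longrightarrow> 12* s^2 - 1 > 0 \<Longrightarrow>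
   l/(s^2) + (s^2 - l)/s * (s*w + 2/(3* s) + 1/((1/(k*p))*(12* s^2 - 1)))
   = 1 + (s^2 - l)*(w - 1/(3* s^2) + k*p/(s*(12* s^2 - 1)))"
  by (simp add: field_simps power2_eq_square)

lemma reduce:
  fixes lam \<beta> n \<rho> K a W F E :: real
  assumes lam: "lam \<ge> 1" and b: "\<beta> > 0"
  assumes n_def: "n = lam + \<beta> * sqrt lam"
  assumes \<rho>_def: "\<rho> = lam / n"
  assumes K_def: "K = exp (n * psi \<rho>)"
  assumes a_def: "a = sqrt n * sqrt (2 * psi \<rho>)"
  assumes W_def: "W = K * Ia n \<rho>"
  assumes F_def: "F = K * Ib n \<rho>"
  assumes E_def: "E = K * sqrt (2*pi) / (sqrt n * (12*n - 1))"
  shows "lam < n" "0 < \<rho>" "\<rho> < 1" "K \<ge> 1"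
    "W = K * (sqrt (2*pi) / sqrt n * Phi a)"
    "E * (Phi a * (12*n - 1)) = W"
    "alpha_tilde \<beta> lam = inverse (1 + (n - lam) * F)"
    "UB \<beta> lam = inverse (1 + (n - lam) * (W - 1/(3*n) + 0))"
    "LB \<beta> lam = inverse (1 + (n - lam) * (W - 1/(3*n) + E))"
proof -
  have lam0: "lam > 0" using lam by simp
  show nl: "lam < n" unfolding n_def using b lam0 by simp
  have n0: "n > 0" using nl lam0 by simp
  have n1: "n \<ge> 1" using nl lam by simp
  show r0: "0 < \<rho>" unfolding \<rho>_def using lam0 n0 by simp
  show r1: "\<rho> < 1" unfolding \<rho>_def using nl n0 by simp
  have lamr: "n * \<rho> = lam" unfolding \<rho>_def using n0 by simp
  have psi0: "psi \<rho> \<ge> 0" using psi_nonneg[OF r0] .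
  show K1: "K \<ge> 1" unfolding K_def using psi0 n0 by simp
  have K0: "K > 0" unfolding K_def by simp
  have Ia: "Ia n \<rho> = sqrt (2*pi) / sqrt n * Phi a"
    unfolding a_def by (rule Ia_eq[OF n0 r0 r1])
  show Weq: "W = K * (sqrt (2*pi) / sqrt n * Phi a)" unfolding W_def Ia ..
  have aeq: "sqrt (- 2 * n * (1 - \<rho> + ln \<rho>)) = a"
  proof -
    have e1: "- 2 * n * (1 - \<rho> + ln \<rho>) = n * (2 * psi \<rho>)" unfolding psi_def by (simp add: algebra_simps)
    have "sqrt (- 2 * n * (1 - \<rho> + ln \<rho>)) = sqrt (n * (2 * psi \<rho>))" by (simp only: e1)
    also have "\<dots> = a" unfolding a_def by (rule real_sqrt_mult)
    finally show ?thesis .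
  qed
  have phia: "phi a = 1 / (K * sqrt (2*pi))"
  proof -
    have a2: "a^2 = n * (2 * psi \<rho>)" unfolding a_def using n0 psi0 by (simp add: power_mult_distrib)
    have "exp (- (a^2) / 2) = exp (- (n * psi \<rho>))" unfolding a2 by simp
    also have "\<dots> = 1 / K" unfolding K_def by (simp add: exp_minus inverse_eq_divide)
    finally have "exp (- (a^2) / 2) = 1 / K" .
    thus ?thesis unfolding phi_def by simp
  qed
  have sn: "sqrt n * sqrt n = n" using n0 by simp
  have sn0: "sqrt n > 0" using n0 by simp
  have n12: "12 * n - 1 > 0" using n1 by simp
  show "E * (Phi a * (12*n - 1)) = W"
    unfolding E_def Weq using sn0 n12 by (simp add: field_simps)
  have PhiPhi: "Phi a / phi a = sqrt n * W"
    unfolding phia Weq using K0 sn0 sn by (simp add: field_simps)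
  have Fpw: "(1+t) powr (n-1) * exp (- (n*\<rho>) * t) = K * (exp (- n * psi (\<rho>*(1+t))) / (1+t))"
    if t: "t > 0" for t
  proof -
    have "(1+t) powr (n-1) = (1+t) powr n / (1+t)" using t by (simp add: powr_diff)
    hence "(1+t) powr (n-1) * exp (- (n*\<rho>) * t) = ((1+t) powr n * exp (- (n*\<rho>) * t)) / (1+t)"
      by simp
    also have "\<dots> = K * (exp (- n * psi (\<rho>*(1+t))) / (1+t))"
      unfolding K_def using powr_exp_psi[of t \<rho> n] t r0 by simp
    finally show ?thesis .
  qed
  have Fint: "(LBINT t:{0<..}. (1+t) powr (n-1) * exp (- (n*\<rho>) * t)) = F"
  proof -
    have "(LBINT t:{0<..}. (1+t) powr (n-1) * exp (- (n*\<rho>) * t))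
        = (LBINT t:{0<..}. K * (exp (- n * psi (\<rho>*(1+t))) / (1+t)))"
      by (rule set_lebesgue_integral_cong) (use Fpw in auto)
    also have "\<dots> = F" unfolding F_def Ib_def by (rule set_integral_mult_right)
    finally show ?thesis .
  qed
  note AI = alpha_int(2)[OF n1 r0 r1]
  show "alpha_tilde \<beta> lam = inverse (1 + (n - lam) * F)"
  proof -
    have Fnn: "F \<ge> 0" unfolding F_def Ib_def set_lebesgue_integral_def using K0 r0
      by (intro mult_nonneg_nonneg Bochner_Integration.integral_nonneg) (auto simp: less_imp_le indicator_def)
    have Fint': "(LBINT t:{0<..}. (1+t) powr (n-1) * exp (- lam * t)) = F"
      using Fint unfolding lamr .
    have eq: "lam * (LBINT t:{0..}. t * exp (- lam * t) * (1 + t) powr (n - 1)) = 1 + (n - lam) * F"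
      using AI unfolding lamr Fint' .
    have "inverse (1 + (n - lam) * F) \<le> 1" using Fnn nl by (simp add: inverse_le_1_iff)
    hence "min 1 (inverse (1 + (n - lam) * F)) = inverse (1 + (n - lam) * F)" by (rule min_absorb2)
    thus ?thesis unfolding alpha_tilde_def alpha_bar_def n_def[symmetric] eq .
  qed
  show "UB \<beta> lam = inverse (1 + (n - lam) * (W - 1/(3*n) + 0))"
  proof -
    have "UB \<beta> lam = inverse (\<rho> + (n - lam) / sqrt n * (Phi a / phi a + 2 / (3 * sqrt n)))"
      unfolding UB_def Let_def n_def[symmetric] \<rho>_def[symmetric] aeq ..
    also have "\<rho> + (n - lam) / sqrt n * (Phi a / phi a + 2 / (3 * sqrt n)) = 1 + (n - lam) * (W - 1/(3*n) + 0)"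
      unfolding PhiPhi \<rho>_def using algUB[of "sqrt n" lam W] sn0 n0 by simp
    finally show ?thesis .
  qed
  show "LB \<beta> lam = inverse (1 + (n - lam) * (W - 1/(3*n) + E))"
  proof -
    have "LB \<beta> lam = inverse (\<rho> + (n - lam) / sqrt n * (Phi a / phi a + 2 / (3 * sqrt n) + 1 / (phi a * (12 * n - 1))))"
      unfolding LB_def Let_def n_def[symmetric] \<rho>_def[symmetric] aeq ..
    also have "\<rho> + (n - lam) / sqrt n * (Phi a / phi a + 2 / (3 * sqrt n) + 1 / (phi a * (12 * n - 1)))
         = 1 + (n - lam) * (W - 1/(3*n) + E)"
      unfolding PhiPhi unfolding \<rho>_def E_def phia using algLB[of "sqrt n" K "sqrt (2*pi)" lam W] sn0 n0 n12 K0 by simp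
    finally show ?thesis .
  qed
qed

lemma main_est:
  assumes eta: "eta > 0"
  shows "\<exists>L. \<forall>lam \<beta>. lam \<ge> L \<longrightarrow> \<beta> > 0 \<longrightarrow>
           \<bar>alpha_tilde \<beta> lam - LB \<beta> lam\<bar> \<le> eta \<and> \<bar>UB \<beta> lam - alpha_tilde \<beta> lam\<bar> \<le> eta"
proof -
  define e where "e = min eta 1"
  have e: "e > 0" "e \<le> 1" "e \<le> eta" using eta by (auto simp: e_def)
  obtain N where N: "\<And>n \<rho>. n \<ge> N \<Longrightarrow> 0 < \<rho> \<Longrightarrow> \<rho> < 1 \<Longrightarrow> \<bar>Ib n \<rho> - Ia n \<rho>\<bar> \<le> (e/4) * Ia n \<rho>"
    using key[of "e/4"] e by auto
  define P0 where "P0 = Phi 0"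
  have P0: "P0 > 0" using Phi_0_pos by (simp add: P0_def)
  define c0 where "c0 = sqrt (2*pi) * P0"
  have c0: "c0 > 0" using P0 by (simp add: c0_def)
  define L where "L = max (max N 1) (max ((8 / (3 * e * c0))^2) ((8 / (e * P0) + 1) / 12))"
  have "\<bar>alpha_tilde \<beta> lam - LB \<beta> lam\<bar> \<le> eta \<and> \<bar>UB \<beta> lam - alpha_tilde \<beta> lam\<bar> \<le> eta"
    if lamL: "lam \<ge> L" and b: "\<beta> > 0" for lam \<beta>
  proof -
    have lam1: "lam \<ge> 1" using lamL by (simp add: L_def)
    define n where "n = lam + \<beta> * sqrt lam"
    define \<rho> where "\<rho> = lam / n"
    define K where "K = exp (n * psi \<rho>)"
    define a where "a = sqrt n * sqrt (2 * psi \<rho>)"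
    define W where "W = K * Ia n \<rho>"
    define F where "F = K * Ib n \<rho>"
    define E where "E = K * sqrt (2*pi) / (sqrt n * (12*n - 1))"
    note R = reduce[OF lam1 b n_def \<rho>_def K_def a_def W_def F_def E_def]
    have nL: "n \<ge> L" using R(1) lamL by simp
    have nN: "n \<ge> N" using nL by (simp add: L_def)
    have n1: "n \<ge> 1" using nL by (simp add: L_def)
    have K0: "K > 0" by (simp add: K_def)
    have sn0: "sqrt n > 0" using n1 by simp
    have a0: "a \<ge> 0" unfolding a_def using n1 psi_nonneg[OF R(2)] by simp
    have Pa: "Phi a \<ge> P0" unfolding P0_def using a0 by (rule Phi_mono)
    have key1: "\<bar>Ib n \<rho> - Ia n \<rho>\<bar> \<le> (e/4) * Ia n \<rho>" by (rule N[OF nN R(2) R(3)])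
    have FW: "\<bar>F - W\<bar> \<le> (e/4) * W"
    proof -
      have "\<bar>F - W\<bar> = K * \<bar>Ib n \<rho> - Ia n \<rho>\<bar>"
        unfolding F_def W_def using K0 by (simp add: abs_mult right_diff_distrib[symmetric])
      also have "\<dots> \<le> K * ((e/4) * Ia n \<rho>)" using key1 K0 by (intro mult_left_mono) auto
      finally show ?thesis unfolding W_def by (simp add: mult_ac)
    qed
    have Wlow: "W \<ge> c0 / sqrt n"
    proof -
      have "c0 / sqrt n = 1 * (sqrt (2*pi) / sqrt n * P0)" unfolding c0_def by simp
      also have "\<dots> \<le> K * (sqrt (2*pi) / sqrt n * Phi a)"
        using R(4) Pa P0 sn0 by (intro mult_mono mult_left_mono) auto
      finally show ?thesis using R(5) by simp
    qed
    have W0: "W > 0" using Wlow c0 sn0 by (smt (verit) divide_pos_pos)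
    have n12: "12 * n - 1 > 0" using n1 by simp
    have E0: "E \<ge> 0" unfolding E_def using K0 sn0 n12 by simp
    have EW: "E \<le> (e/8) * W"
    proof -
      have "12 * n - 1 \<ge> 8 / (e * P0)" using nL by (simp add: L_def)
      hence "P0 * (12 * n - 1) \<ge> 8 / e" using P0 e by (simp add: field_simps)
      moreover have "Phi a * (12 * n - 1) \<ge> P0 * (12 * n - 1)" using Pa n12 by (intro mult_right_mono) auto
      ultimately have h: "Phi a * (12 * n - 1) \<ge> 8 / e" by linarith
      have "E * (8 / e) \<le> E * (Phi a * (12 * n - 1))" using h E0 by (intro mult_left_mono) auto
      also have "\<dots> = W" by (rule R(6))
      finally show ?thesis using e by (simp add: field_simps)
    qed
    have n3: "1 / (3 * n) \<le> (e/8) * W"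
    proof -
      have "sqrt n \<ge> 8 / (3 * e * c0)"
      proof -
        have "(8 / (3 * e * c0))^2 \<le> n" using nL by (simp add: L_def)
        hence "sqrt ((8 / (3 * e * c0))^2) \<le> sqrt n" by (rule real_sqrt_le_mono)
        thus ?thesis using e c0 by simp
      qed
      hence h8: "8 \<le> sqrt n * (3 * e * c0)" using e c0 by (simp add: field_simps)
      have "sqrt n * 8 \<le> sqrt n * (sqrt n * (3 * e * c0))" by (rule mult_left_mono[OF h8]) (use sn0 in simp)
      also have "\<dots> = c0 * (e * (n * 3))" using n1 by (simp add: mult.assoc[symmetric])
      finally have "sqrt n * 8 \<le> c0 * (e * (n * 3))" .
      hence "1 / (3 * n) \<le> (e/8) * (c0 / sqrt n)"
        using sn0 e c0 n1 by (simp add: field_simps)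
      also have "\<dots> \<le> (e/8) * W" using Wlow e by (intro mult_left_mono) auto
      finally show ?thesis .
    qed
    have F0: "F \<ge> 0" unfolding F_def Ib_def set_lebesgue_integral_def using K0 R(2)
      by (intro mult_nonneg_nonneg Bochner_Integration.integral_nonneg) (auto simp: less_imp_le indicator_def)
    have m: "n - lam \<ge> 0" using R(1) by simp
    have A1: "\<bar>inverse (1 + (n - lam) * F) - inverse (1 + (n - lam) * (W - 1/(3*n) + E))\<bar> \<le> e"
      by (rule approx_final[OF FW E0 EW n3 _ W0 e(1) e(2) F0 m]) (use n1 in simp)
    have A2: "\<bar>inverse (1 + (n - lam) * F) - inverse (1 + (n - lam) * (W - 1/(3*n) + 0))\<bar> \<le> e"
      by (rule approx_final[OF FW _ _ n3 _ W0 e(1) e(2) F0 m]) (use n1 W0 e in simp_all)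
    show ?thesis unfolding R(7) R(8) R(9) using A1 A2 e(3) by (simp add: abs_minus_commute)
  qed
  thus ?thesis by blast
qed

lemma sup_lim:
  fixes f :: "real \<Rightarrow> real \<Rightarrow> real"
  assumes H: "\<And>eta. eta > 0 \<Longrightarrow> \<exists>L. \<forall>lam \<beta>. lam \<ge> L \<longrightarrow> \<beta> > 0 \<longrightarrow> \<bar>f \<beta> lam\<bar> \<le> eta"
  shows "((\<lambda>lam. SUP \<beta>\<in>{0<..}. f \<beta> lam) \<longlongrightarrow> 0) at_top"
proof (rule tendstoI)
  fix e :: real assume e: "e > 0"
  obtain L where L: "\<And>lam \<beta>. lam \<ge> L \<Longrightarrow> \<beta> > 0 \<Longrightarrow> \<bar>f \<beta> lam\<bar> \<le> e/2"
    using H[of "e/2"] e by auto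
  have "eventually (\<lambda>lam. lam \<ge> L) at_top" by (rule eventually_ge_at_top)
  thus "eventually (\<lambda>lam. dist (SUP \<beta>\<in>{0<..}. f \<beta> lam) 0 < e) at_top"
  proof eventually_elim
    case (elim lam)
    have ub: "f \<beta> lam \<le> e/2" if "\<beta> \<in> {0<..}" for \<beta> using L[OF elim, of \<beta>] that by auto
    have "(SUP \<beta>\<in>{0<..}. f \<beta> lam) \<le> e/2"
      by (rule cSUP_least) (use ub in auto)
    moreover have "f 1 lam \<le> (SUP \<beta>\<in>{0<..}. f \<beta> lam)"
    proof (rule cSUP_upper)
      show "bdd_above ((\<lambda>\<beta>. f \<beta> lam) ` {0<..})" by (rule bdd_aboveI2[where M="e/2"]) (use ub in auto)
    qed simp
    moreover have "f 1 lam \<ge> - (e/2)" using L[OF elim, of 1] by auto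
    ultimately show ?case using e by (simp add: dist_real_def abs_less_iff)
  qed
qed

theorem theorem3:
  shows "((\<lambda>lam. SUP \<beta>\<in>{0<..}. alpha_tilde \<beta> lam - LB \<beta> lam) \<longlongrightarrow> 0) at_top \<and>
         ((\<lambda>lam. SUP \<beta>\<in>{0<..}. UB \<beta> lam - alpha_tilde \<beta> lam) \<longlongrightarrow> 0) at_top"
proof
  show "((\<lambda>lam. SUP \<beta>\<in>{0<..}. alpha_tilde \<beta> lam - LB \<beta> lam) \<longlongrightarrow> 0) at_top"
    by (rule sup_lim[where f="\<lambda>\<beta> lam. alpha_tilde \<beta> lam - LB \<beta> lam"]) (use main_est in blast)
  show "((\<lambda>lam. SUP \<beta>\<in>{0<..}. UB \<beta> lam - alpha_tilde \<beta> lam) \<longlongrightarrow> 0) at_top"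
    by (rule sup_lim[where f="\<lambda>\<beta> lam. UB \<beta> lam - alpha_tilde \<beta> lam"]) (use main_est in blast)
qed

end
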